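(* Let $r$ be a Lyndon word with $|r|\ge2$ and standard factorization $r=r's'$, and let $u$ be a nonempty word such that $u\le s'$ and $ru$ is a Lyndon word. Then the lexicographically smallest proper nonempty suffix of $ru$ is a suffix of $u$ (i.e., has length at most $|u|$).
   Context: Words are finite sequences over a totally ordered alphabet, compared in lexicographic order (a proper prefix is smaller than the word). A Lyndon word is a nonempty word strictly smaller than each of its proper nonempty suffixes. For a Lyndon word $r$ with $|r|\ge2$, its standard factorization is $r=r's'$ where $s'$ is the longest proper suffix of $r$ that is a Lyndon word; equivalently, $s'$ is the lexicographically smallest proper nonempty suffix of $r$. *)

theory Defs
  imports Main
begin

text \<open>Lexicographic order on words over a totally ordered alphabet; a proper
prefix is smaller than the word (this is the library relation lexordp).\<close>
definition word_less :: "'a::linorder list \<Rightarrow> 'a list \<Rightarrow> bool" where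
  "word_less xs ys \<longleftrightarrow> lexordp (<) xs ys"

definition word_le :: "'a::linorder list \<Rightarrow> 'a list \<Rightarrow> bool" where
  "word_le xs ys \<longleftrightarrow> word_less xs ys \<or> xs = ys"

definition proper_suffix_ne :: "'a list \<Rightarrow> 'a list \<Rightarrow> bool" where
  "proper_suffix_ne v w \<longleftrightarrow> (\<exists>i. 0 < i \<and> i < length w \<and> v = drop i w)"

definition lyndon :: "'a::linorder list \<Rightarrow> bool" where
  "lyndon w \<longleftrightarrow> w \<noteq> [] \<and> (\<forall>v. proper_suffix_ne v w \<longrightarrow> word_less w v)"

definition std_fact :: "'a::linorder list \<Rightarrow> 'a list \<Rightarrow> 'a list \<Rightarrow> bool" where
  "std_fact r r' s' \<longleftrightarrow> r = r' @ s' \<and> proper_suffix_ne s' r \<and> lyndon s' \<and>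
     (\<forall>v. proper_suffix_ne v r \<and> lyndon v \<longrightarrow> length v \<le> length s')"

end

theory Submission
  imports Defs "HOL-Library.List_Lexorder"
begin

lemma wl_iff2: "word_less xs ys \<longleftrightarrow> ord_class.lexordp xs (ys::'a::linorder list)"
  by (simp add: word_less_def List.lexordp_def lexordp_conv_lexord)

lemma wl_iff: "word_less xs ys \<longleftrightarrow> xs < (ys::'a::linorder list)"
  by (simp add: wl_iff2 list_less_def lexordp_conv_lexord)

lemma lemA:
  fixes u x :: "'a::linorder list"
  assumes "word_le u x"
  shows "\<not> word_less (x @ u) u"
proof
  assume a: "word_less (x @ u) u"
  have "ord_class.lexordp u (x @ u) \<or> u = x @ u"
  proof (cases "u = x")
    case True
    then show ?thesis using lexordp_eq_pref[of x x] lexordp_eq_conv_lexord by metis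
  next
    case False
    then have "ord_class.lexordp u x" using assms by (simp add: word_le_def wl_iff2)
    then have "(\<exists>c vs. x = u @ c # vs) \<or> (\<exists>us a b vs ws. a < b \<and> u = us @ a # vs \<and> x = us @ b # ws)"
      by (simp add: lexordp_iff)
    then show ?thesis
    proof
      assume "\<exists>c vs. x = u @ c # vs"
      then obtain c vs where "x = u @ c # vs" by blast
      then show ?thesis using lexordp_append_rightI[of "c # vs @ u" u] by simp
    next
      assume "\<exists>us a b vs ws. a < b \<and> u = us @ a # vs \<and> x = us @ b # ws"
      then obtain us a b vs ws where "a < b" "u = us @ a # vs" "x = us @ b # ws" by blast
      then show ?thesis using lexordp_append_left_rightI[of a b us vs "ws @ u"] by simp
    qed
  qed
  then show False using a lexordp_antisym lexordp_irreflexive'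
    by (metis wl_iff2)
qed

lemma lemB:
  fixes r r' s' x :: "'a::linorder list"
  assumes sf: "std_fact r r' s'" and px: "proper_suffix_ne x r"
  shows "word_le s' x"
proof -
  define V where "V = {v. proper_suffix_ne v r}"
  have Vsub: "V \<subseteq> (\<lambda>i. drop i r) ` {..<length r}"
    by (auto simp: V_def proper_suffix_ne_def)
  have fin: "finite V" using Vsub finite_subset by blast
  have sV: "s' \<in> V" using sf unfolding V_def std_fact_def by blast
  define v where "v = Min V"
  have vV: "v \<in> V" using fin sV Min_in v_def by blast
  have vmin: "\<And>w. w \<in> V \<Longrightarrow> v \<le> w" using fin v_def by simp
  obtain i where i: "0 < i" "i < length r" "v = drop i r"
    using vV by (auto simp: V_def proper_suffix_ne_def)
  have lv: "lyndon v"
    unfolding lyndon_def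
  proof (intro conjI allI impI)
    show "v \<noteq> []" using i by simp
  next
    fix w assume "proper_suffix_ne w v"
    then obtain j where j: "0 < j" "j < length v" "w = drop j v"
      by (auto simp: proper_suffix_ne_def)
    have "w = drop (i + j) r" using i j by (simp add: add.commute)
    moreover have "i + j < length r" using i j by simp
    ultimately have "w \<in> V" using i j by (auto simp: V_def proper_suffix_ne_def)
    then have "v \<le> w" by (rule vmin)
    moreover have "v \<noteq> w" proof assume "v = w" then have "length v = length w" by simp then show False using j by simp qed
    ultimately show "word_less v w" by (simp add: wl_iff)
  qed
  have "length v \<le> length s'" using sf lv vV by (simp add: std_fact_def V_def)
  obtain k where k: "0 < k" "k < length r" "s' = drop k r"
  proof -
    have "proper_suffix_ne s' r" using sf unfolding std_fact_def by blast
    then show ?thesis using that unfolding proper_suffix_ne_def by blast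
  qed
  have "v = s'"
  proof (rule ccontr)
    assume ne: "v \<noteq> s'"
    have "length v \<noteq> length s'"
    proof
      assume "length v = length s'"
      then have "i = k" using i k by simp
      then show False using ne i k by simp
    qed
    then have "length v < length s'" using \<open>length v \<le> length s'\<close> by simp
    then have ki: "k < i" using i k by simp
    have "v = drop (i - k) s'" using i k ki by simp
    then have "proper_suffix_ne v s'" using ki i k
      unfolding proper_suffix_ne_def by (intro exI[of _ "i - k"]) simp
    then have "word_less s' v" using sf by (simp add: std_fact_def lyndon_def)
    moreover have "v \<le> s'" using vmin sV by blast
    ultimately show False by (simp add: wl_iff)
  qed
  moreover have "x \<in> V" using px by (simp add: V_def)
  ultimately have "s' \<le> x" using vmin by blast
  then show ?thesis by (auto simp: word_le_def wl_iff)
qed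

theorem lemma4p20:
  fixes r r' s' u :: "'a::linorder list"
  assumes "lyndon r" and "length r \<ge> 2"
    and "std_fact r r' s'"
    and "u \<noteq> []" and "word_le u s'"
    and "lyndon (r @ u)"
  shows "\<forall>m. proper_suffix_ne m (r @ u) \<and>
           (\<forall>v. proper_suffix_ne v (r @ u) \<longrightarrow> word_le m v)
           \<longrightarrow> length m \<le> length u"
proof (intro allI impI)
  fix m assume h: "proper_suffix_ne m (r @ u) \<and> (\<forall>v. proper_suffix_ne v (r @ u) \<longrightarrow> word_le m v)"
  show "length m \<le> length u"
  proof (rule ccontr)
    assume "\<not> length m \<le> length u"
    then have gt: "length u < length m" by simp
    obtain i where i: "0 < i" "i < length (r @ u)" "m = drop i (r @ u)"
      using h by (auto simp: proper_suffix_ne_def)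
    have ir: "i < length r" using gt i by simp
    define x where "x = drop i r"
    have mx: "m = x @ u" using i ir by (simp add: x_def)
    have px: "proper_suffix_ne x r" using i ir by (auto simp: proper_suffix_ne_def x_def)
    have "word_le s' x" using lemB[OF assms(3) px] .
    then have ux: "word_le u x" using assms(5)
      by (auto simp: word_le_def wl_iff)
    have "proper_suffix_ne u (r @ u)" using assms(1) assms(4)
      unfolding proper_suffix_ne_def lyndon_def
      by (intro exI[of _ "length r"]) simp
    then have "word_le m u" using h by blast
    moreover have "m \<noteq> u" using gt by auto
    ultimately have "word_less (x @ u) u" using mx by (simp add: word_le_def)
    then show False using lemA[OF ux] by simp
  qed
qed

end
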